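(* Let $q$ be a prime power, let $r$ be an odd prime not dividing $q$ such that the multiplicative order of $q$ modulo $r$ is $r-1$. Let $n>1$ with $\gcd(n,r-1)=1$, and let $f(x)$ be a monic irreducible polynomial of degree $n$ over $\mathbb{F}_q$ of order $t$. Let $R(x)\in\mathbb{F}_q[x]$ be the remainder of $x^r$ modulo $f(x)$, i.e. $x^r\equiv R(x)\pmod{f(x)}$, and let $\psi(x)=\sum_{u=0}^{n}\psi_u x^u\in\mathbb{F}_q[x]$ be the monic nonzero polynomial of least degree such that $$\sum_{u=0}^{n}\psi_u\,(R(x))^u\equiv 0\pmod{f(x)}.$$ Then $\psi(x)$ is an irreducible polynomial of degree $n$ over $\mathbb{F}_q$, and $$F(x)=\frac{\psi(x^r)}{f(x)}$$ is an irreducible polynomial of degree $(r-1)n$ over $\mathbb{F}_q$ whose order is $rt$.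
   Context: The order of a polynomial $P(x)\in\mathbb{F}_q[x]$ with $P(0)\neq0$ is the least positive integer $e$ such that $P(x)$ divides $x^e-1$; for an irreducible $P$ it equals the multiplicative order of any of its roots. *)

theory Defs
  imports "HOL-Computational_Algebra.Computational_Algebra" "HOL-Number_Theory.Number_Theory"
begin

definition poly_order :: "'a::field poly \<Rightarrow> nat" where
  "poly_order P = (LEAST e. 0 < e \<and> P dvd [:0, 1:] ^ e - 1)"

end

theory Submission
  imports Defs "HOL-Algebra.Algebraic_Closure_Type"
begin
hide_const (open) Polynomials.degree Polynomials.lead_coeff up_ring.coeff module.smult up_ring.monom Divisibility.irreducible Divisibility.prime

lemma map_poly_add_hom:
  assumes "f 0 = 0" "\<And>a b. f (a + b) = f a + f b"
  shows "map_poly f (p + q) = map_poly f p + map_poly f q"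
  by (intro poly_eqI) (simp add: coeff_map_poly assms)

lemma map_poly_mult_hom:
  fixes f :: "'b::comm_ring_1 \<Rightarrow> 'c::comm_ring_1"
  assumes h: "f 0 = 0" "\<And>a b. f (a + b) = f a + f b" "\<And>a b. f (a * b) = f a * f b"
  shows "map_poly f (p * q) = map_poly f p * map_poly f q"
proof (induction p)
  case 0 show ?case by simp
next
  case (pCons a p)
  have "map_poly f (pCons a p * q) = map_poly f (smult a q + pCons 0 (p * q))" by simp
  also have "\<dots> = smult (f a) (map_poly f q) + pCons 0 (map_poly f p * map_poly f q)"
    by (simp add: map_poly_add_hom[OF h(1,2)] map_poly_smult h map_poly_pCons pCons.IH)
  also have "\<dots> = map_poly f (pCons a p) * map_poly f q" by (simp add: map_poly_pCons h)
  finally show ?case .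
qed

lemma map_poly_power_hom:
  fixes f :: "'b::comm_ring_1 \<Rightarrow> 'c::comm_ring_1"
  assumes h: "f 0 = 0" "f 1 = 1" "\<And>a b. f (a + b) = f a + f b" "\<And>a b. f (a * b) = f a * f b"
  shows "map_poly f (p ^ k) = map_poly f p ^ k"
  by (induction k) (simp_all add: map_poly_mult_hom[OF h(1,3,4)] h)

lemma map_poly_prod_hom:
  fixes f :: "'b::comm_ring_1 \<Rightarrow> 'c::comm_ring_1"
  assumes h: "f 0 = 0" "f 1 = 1" "\<And>a b. f (a + b) = f a + f b" "\<And>a b. f (a * b) = f a * f b"
  shows "map_poly f (\<Prod>i\<in>A. g i) = (\<Prod>i\<in>A. map_poly f (g i))"
  by (induction A rule: infinite_finite_induct) (simp_all add: map_poly_mult_hom[OF h(1,3,4)] h)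

lemma fin_pow_card:
  fixes x :: "'a::{finite,field}"
  shows "x ^ card (UNIV::'a set) = x"
proof (cases "x = 0")
  case False
  have "x * (\<Prod>y\<in>UNIV-{0}. x * y) = x * x ^ (card (UNIV :: 'a set) - 1) * \<Prod>(UNIV-{0})"
    by (simp add: prod.distrib mult_ac)
  also have "x * x ^ (card (UNIV :: 'a set) - 1) = x ^ Suc (card (UNIV :: 'a set) - 1)"
    by (subst power_Suc) auto
  also have "Suc (card (UNIV :: 'a set) - 1) = card (UNIV :: 'a set)"
    using finite_UNIV_card_ge_0[where ?'a = 'a] by simp
  also have "(\<Prod>y\<in>UNIV-{0}. x * y) = (\<Prod>y\<in>UNIV-{0}. y)"
    by (rule prod.reindex_bij_witness[of _ "\<lambda>y. y / x" "\<lambda>y. x * y"]) (use False in auto)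
  finally show ?thesis
    by simp
qed (use finite_UNIV_card_ge_0[where ?'a = 'a] in auto)

lemma card_field_ge2: "card (UNIV::'a::{finite,field} set) \<ge> 2"
proof -
  have "{0::'a, 1} \<subseteq> UNIV" by simp
  hence "card {0::'a,1} \<le> card (UNIV::'a set)" by (intro card_mono) auto
  thus ?thesis by simp
qed

lemma degree_frob_poly:
  fixes x z :: "'b::field"
  assumes "k \<ge> 1"
  shows "degree ([:x,1:]^k - monom 1 k - [:z:]) < k"
proof -
  define A where "A = [:x,1:]^k - monom 1 k"
  have dA: "degree A \<le> k" unfolding A_def
    by (intro degree_diff_le) (simp_all add: degree_linear_power degree_monom_le)
  have cA: "coeff A k = 0" unfolding A_def
    using lead_coeff_power[of "[:x,1:]" k] by (simp add: degree_linear_power)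
  have "degree A < k"
  proof (rule ccontr)
    assume "\<not> degree A < k"
    hence "degree A = k" using dA by simp
    hence "A = 0" using cA by (metis leading_coeff_0_iff)
    thus False using \<open>degree A = k\<close> assms by simp
  qed
  moreover have "degree (A - [:z:]) \<le> max (degree A) (degree [:z:])" by (rule degree_diff_le_max)
  ultimately have "degree (A - [:z:]) < k" using assms by simp
  thus ?thesis by (simp add: A_def)
qed

lemmas acH = to_ac_0 to_ac_1 to_ac_add to_ac_mult

lemma map_ac_add: "map_poly to_ac (p + q) = map_poly to_ac p + map_poly to_ac (q::'a::field poly)"
  by (intro poly_eqI) (simp add: coeff_map_poly)

lemma map_ac_mult: "map_poly to_ac (p * q) = map_poly to_ac p * map_poly to_ac (q::'a::field poly)"
  by (rule map_poly_mult_hom[where f = to_ac]) simp_all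

lemma map_ac_power: "map_poly to_ac (p ^ e) = map_poly to_ac (p::'a::field poly) ^ e"
  by (rule map_poly_power_hom[where f = to_ac]) simp_all

lemma to_ac_pow_card: "to_ac (c::'a::{finite,field}) ^ card (UNIV::'a set) = to_ac c"
  by (metis fin_pow_card to_ac_power)

lemma frob_add_const:
  fixes c :: "'a::{finite,field}" and x :: "'a alg_closure"
  shows "(to_ac c + x) ^ card (UNIV::'a set) = to_ac c + x ^ card (UNIV::'a set)"
proof -
  define k where "k = card (UNIV::'a set)"
  have k1: "k \<ge> 1" using card_field_ge2[where 'a='a] k_def by simp
  define P :: "'a poly" where "P = [:c,1:]^k - monom 1 k - [:c:]"
  have "P = 0"
  proof (rule ccontr)
    assume "P \<noteq> 0"
    have "UNIV \<subseteq> {a. poly P a = 0}"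
      by (auto simp: P_def poly_monom k_def fin_pow_card)
    hence "card (UNIV::'a set) \<le> card {a. poly P a = 0}" by (intro card_mono) auto
    also have "\<dots> \<le> degree P" by (rule card_poly_roots_bound) fact
    also have "\<dots> < k" unfolding P_def by (rule degree_frob_poly[OF k1])
    finally show False by (simp add: k_def)
  qed
  hence "[:c,1:]^k = monom 1 k + [:c:]"
    by (simp add: P_def algebra_simps)
  hence "map_poly to_ac ([:c,1:]^k) = map_poly to_ac (monom 1 k + [:c:])"
    by simp
  hence "[:to_ac c, 1:]^k = monom 1 k + [:to_ac c:]"
    by (simp add: map_ac_power map_ac_add map_poly_monom map_poly_pCons)
  hence "poly ([:to_ac c, 1:]^k) x = poly (monom 1 k + [:to_ac c:]) x" by simp
  thus ?thesis by (simp add: poly_monom k_def add.commute)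
qed

lemma frob_add:
  fixes x y :: "'a::{finite,field} alg_closure"
  shows "(x + y) ^ card (UNIV::'a set) = x ^ card (UNIV::'a set) + y ^ card (UNIV::'a set)"
proof -
  define k where "k = card (UNIV::'a set)"
  have k1: "k \<ge> 1" using card_field_ge2[where 'a='a] k_def by simp
  define Q :: "'a alg_closure poly" where "Q = [:x,1:]^k - monom 1 k - [:x^k:]"
  have "Q = 0"
  proof (rule ccontr)
    assume "Q \<noteq> 0"
    have "poly Q (to_ac c) = 0" for c
    proof -
      have "poly Q (to_ac c) = (to_ac c + x)^k - (to_ac c)^k - x^k"
        by (simp add: Q_def poly_monom add.commute)
      also have "\<dots> = 0" by (simp add: frob_add_const to_ac_pow_card k_def)
      finally show ?thesis .
    qed
    hence "range to_ac \<subseteq> {a. poly Q a = 0}" by auto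
    hence "card (range (to_ac::'a \<Rightarrow> _)) \<le> card {a. poly Q a = 0}"
      by (rule card_mono[OF poly_roots_finite[OF \<open>Q \<noteq> 0\<close>]])
    moreover have "card (range (to_ac::'a \<Rightarrow> _)) = k" by (simp add: card_image inj_to_ac k_def)
    moreover have "card {a. poly Q a = 0} \<le> degree Q" by (rule card_poly_roots_bound) fact
    moreover have "degree Q < k" unfolding Q_def by (rule degree_frob_poly[OF k1])
    ultimately show False by simp
  qed
  hence "poly Q y = 0" by simp
  thus ?thesis by (simp add: Q_def poly_monom k_def algebra_simps)
qed

lemma frobm_add:
  fixes x y :: "'a::{finite,field} alg_closure"
  shows "(x + y) ^ (card (UNIV::'a set) ^ m) = x ^ (card (UNIV::'a set) ^ m) + y ^ (card (UNIV::'a set) ^ m)"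
proof (induction m)
  case (Suc m)
  show ?case by (simp only: power_Suc2 power_mult Suc.IH frob_add)
qed simp

lemma frobm_diff:
  fixes x y :: "'a::{finite,field} alg_closure"
  shows "(x - y) ^ (card (UNIV::'a set) ^ m) = x ^ (card (UNIV::'a set) ^ m) - y ^ (card (UNIV::'a set) ^ m)"
  using frobm_add[of "x - y" y m] by (simp add: algebra_simps)

lemma frobm_sum:
  fixes g :: "'b \<Rightarrow> 'a::{finite,field} alg_closure"
  shows "(\<Sum>i\<in>A. g i) ^ (card (UNIV::'a set) ^ m) = (\<Sum>i\<in>A. g i ^ (card (UNIV::'a set) ^ m))"
  using card_field_ge2[where 'a='a]
  by (induction A rule: infinite_finite_induct) (simp_all add: frobm_add)

lemma frobm_inj:
  fixes x y :: "'a::{finite,field} alg_closure"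
  assumes "x ^ (card (UNIV::'a set) ^ m) = y ^ (card (UNIV::'a set) ^ m)"
  shows "x = y"
proof -
  have "(x - y) ^ (card (UNIV::'a set) ^ m) = 0" using assms by (simp add: frobm_diff)
  thus ?thesis by simp
qed

lemma frob_fixed:
  fixes x :: "'a::{finite,field} alg_closure"
  assumes "x ^ card (UNIV::'a set) = x"
  shows "x \<in> range to_ac"
proof -
  define k where "k = card (UNIV::'a set)"
  have k2: "k \<ge> 2" using card_field_ge2[where 'a='a] k_def by simp
  define P :: "'a alg_closure poly" where "P = monom 1 k + [:0,-1:]"
  have dP: "degree P = k" unfolding P_def using k2
    by (subst degree_add_eq_left) (auto simp: degree_monom_eq)
  hence "P \<noteq> 0" using k2 by auto
  have fin: "finite {a. poly P a = 0}" by (rule poly_roots_finite) fact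
  have sub: "range to_ac \<subseteq> {a. poly P a = 0}"
    by (auto simp: P_def poly_monom to_ac_pow_card k_def)
  have "card {a. poly P a = 0} \<le> k" using card_poly_roots_bound[OF \<open>P \<noteq> 0\<close>] dP by simp
  moreover have "card (range (to_ac::'a \<Rightarrow> _)) = k" by (simp add: card_image inj_to_ac k_def)
  ultimately have "range to_ac = {a. poly P a = 0}"
    using card_subset_eq[OF fin sub] card_mono[OF fin sub] by simp
  moreover have "x \<in> {a. poly P a = 0}" using assms by (simp add: P_def poly_monom k_def)
  ultimately show ?thesis by simp
qed

lemma to_ac_pow_cardm: "to_ac (c::'a::{finite,field}) ^ (card (UNIV::'a set) ^ m) = to_ac c"
proof (induction m)
  case (Suc m)
  show ?case by (simp only: power_Suc2 power_mult Suc.IH to_ac_pow_card)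
qed simp

lemma ev_add: "poly (map_poly to_ac (p + q)) x = poly (map_poly to_ac p) x + poly (map_poly to_ac q) x"
  by (simp add: map_ac_add)

lemma ev_mult: "poly (map_poly to_ac (p * q)) x = poly (map_poly to_ac p) x * poly (map_poly to_ac q) x"
  by (simp add: map_ac_mult)

lemma ev_power: "poly (map_poly to_ac (p ^ e)) x = poly (map_poly to_ac p) x ^ e"
  by (simp add: map_ac_power)

lemma ev_const [simp]: "poly (map_poly to_ac [:c:]) x = to_ac c"
  by (simp add: map_poly_pCons)

lemma ev_one [simp]: "poly (map_poly to_ac 1) x = 1"
  by simp

lemma ev_X [simp]: "poly (map_poly to_ac [:0,1:]) x = x"
  by (simp add: map_poly_pCons)

lemma ev_diff: "poly (map_poly to_ac (p - q)) x = poly (map_poly to_ac p) x - poly (map_poly to_ac q) x"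
  using ev_add[of "p - q" q x] by (simp add: algebra_simps)

lemma ev_pcompose:
  "poly (map_poly to_ac (pcompose p q)) x = poly (map_poly to_ac p) (poly (map_poly to_ac q) x)"
proof (induction p)
  case 0 show ?case by simp
next
  case (pCons a p)
  have "poly (map_poly to_ac (pcompose (pCons a p) q)) x
        = poly (map_poly to_ac ([:a:] + q * pcompose p q)) x" by (simp add: pcompose_pCons)
  also have "\<dots> = to_ac a + poly (map_poly to_ac q) x * poly (map_poly to_ac p) (poly (map_poly to_ac q) x)"
    by (simp add: ev_add ev_mult pCons.IH)
  also have "\<dots> = poly (map_poly to_ac (pCons a p)) (poly (map_poly to_ac q) x)"
    by (simp add: map_poly_pCons)
  finally show ?case .
qed

lemma ev_dvd:
  assumes "p dvd q" "poly (map_poly to_ac p) x = 0"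
  shows "poly (map_poly to_ac q) x = 0"
  using assms by (auto simp: dvd_def ev_mult)

lemma ev_frob:
  fixes p :: "'a::{finite,field} poly"
  shows "poly (map_poly to_ac p) x ^ (card (UNIV::'a set) ^ m)
       = poly (map_poly to_ac p) (x ^ (card (UNIV::'a set) ^ m))"
proof -
  define K where "K = card (UNIV::'a set) ^ m"
  have "poly (map_poly to_ac p) x ^ K = (\<Sum>i\<le>degree (map_poly to_ac p). coeff (map_poly to_ac p) i * x ^ i) ^ K"
    by (simp add: poly_altdef)
  also have "\<dots> = (\<Sum>i\<le>degree (map_poly to_ac p). (coeff (map_poly to_ac p) i * x ^ i) ^ K)"
    unfolding K_def by (rule frobm_sum)
  also have "\<dots> = (\<Sum>i\<le>degree (map_poly to_ac p). coeff (map_poly to_ac p) i * (x ^ K) ^ i)"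
    by (intro sum.cong refl) (simp add: coeff_map_poly power_mult_distrib to_ac_pow_cardm K_def
          flip: power_mult, simp add: mult.commute)
  also have "\<dots> = poly (map_poly to_ac p) (x ^ K)"
    by (simp add: poly_altdef)
  finally show ?thesis by (simp add: K_def)
qed

lemma irr_bezout:
  fixes p a :: "'a::field poly"
  assumes irr: "irreducible p" and nd: "\<not> p dvd a"
  shows "\<exists>u v. u * p + v * a = 1"
proof -
  define I where "I = {u * p + v * a | u v. True}"
  have closed: "c * x + e * y \<in> I" if "x \<in> I" "y \<in> I" for x y c e
  proof -
    from that obtain u v u' v' where "x = u * p + v * a" "y = u' * p + v' * a" by (auto simp: I_def)
    hence "c * x + e * y = (c * u + e * u') * p + (c * v + e * v') * a" by (simp add: algebra_simps)
    thus ?thesis by (auto simp: I_def)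
  qed
  have pI: "p \<in> I" unfolding I_def by (rule CollectI, rule exI[of _ 1], rule exI[of _ 0]) simp
  have aI: "a \<in> I" unfolding I_def by (rule CollectI, rule exI[of _ 0], rule exI[of _ 1]) simp
  have "p \<noteq> 0" using irr by auto
  obtain d where d: "d \<in> I" "d \<noteq> 0" "\<And>y. y \<in> I \<Longrightarrow> y \<noteq> 0 \<Longrightarrow> degree d \<le> degree y"
  proof -
    have "\<exists>d. (d \<in> I \<and> d \<noteq> 0) \<and> (\<forall>y. y \<in> I \<and> y \<noteq> 0 \<longrightarrow> degree d \<le> degree y)"
      by (rule ex_has_least_nat[of "\<lambda>y. y \<in> I \<and> y \<noteq> 0" p degree]) (use pI \<open>p \<noteq> 0\<close> in simp)
    thus ?thesis using that by blast
  qed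
  have dvd: "d dvd x" if "x \<in> I" for x
  proof -
    have "x mod d = 1 * x + (- (x div d)) * d" by (simp flip: minus_div_mult_eq_mod)
    hence mI: "x mod d \<in> I" using closed[OF that d(1), of 1 "- (x div d)"] by simp
    have "x mod d = 0"
    proof (rule ccontr)
      assume ne: "x mod d \<noteq> 0"
      have "degree (x mod d) < degree d" by (rule degree_mod_less'[OF d(2) ne])
      moreover have "degree d \<le> degree (x mod d)" by (rule d(3)[OF mI ne])
      ultimately show False by simp
    qed
    thus ?thesis by (simp add: mod_eq_0_iff_dvd)
  qed
  have "p dvd d \<or> is_unit d" using irreducibleD'[OF irr dvd[OF pI]] .
  moreover have "\<not> p dvd d" using nd dvd[OF aI] dvd_trans by blast
  ultimately have "is_unit d" by simp
  then obtain e where "1 = d * e" by (auto elim: dvdE)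
  hence "1 = e * d + 0 * d" by (simp add: mult.commute)
  moreover have "e * d + 0 * d \<in> I" by (rule closed[OF d(1) d(1)])
  ultimately have "1 \<in> I" by simp
  then obtain u v where "1 = u * p + v * a" unfolding I_def by blast
  thus ?thesis by (intro exI[of _ u] exI[of _ v]) simp
qed

lemma irr_prime:
  fixes p a b :: "'a::field poly"
  assumes "irreducible p" "p dvd a * b"
  shows "p dvd a \<or> p dvd b"
proof (cases "p dvd a")
  case False
  then obtain u v where uv: "u * p + v * a = 1" using irr_bezout[OF assms(1)] by blast
  have "b = (u * p + v * a) * b" using uv by simp
  also have "\<dots> = (u * b) * p + v * (a * b)" by (simp add: algebra_simps)
  finally have "b = (u * b) * p + v * (a * b)" .
  moreover have "p dvd (u * b) * p + v * (a * b)" using assms(2) by simp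
  ultimately show ?thesis by simp
qed simp

lemma irr_coprime_mult:
  fixes p q c :: "'a::field poly"
  assumes "irreducible p" "\<not> p dvd q" "p dvd c" "q dvd c"
  shows "p * q dvd c"
proof -
  obtain c1 where c1: "c = q * c1" using assms(4) by (auto elim: dvdE)
  hence "p dvd c1" using irr_prime[OF assms(1)] assms(2,3) by auto
  then obtain c2 where "c1 = p * c2" by (auto elim: dvdE)
  thus ?thesis using c1 by (simp add: mult_ac)
qed

lemma irr_root_dvd:
  fixes g h :: "'a::field poly"
  assumes "irreducible g" "poly (map_poly to_ac g) x = 0" "poly (map_poly to_ac h) x = 0"
  shows "g dvd h"
proof (rule ccontr)
  assume "\<not> g dvd h"
  then obtain u v where "u * g + v * h = 1" using irr_bezout[OF assms(1)] by blast
  hence "poly (map_poly to_ac (u * g + v * h)) x = 1"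
    by simp
  thus False using assms by (simp add: ev_add ev_mult)
qed

lemma mult_order:
  fixes x :: "'b::field"
  assumes "x ^ N = 1" "N > 0"
  shows "x ^ e = 1 \<longleftrightarrow> (LEAST e. 0 < e \<and> x ^ e = 1) dvd e"
    and "(LEAST e. 0 < e \<and> x ^ e = 1) > 0"
proof -
  define ox where "ox = (LEAST e. 0 < e \<and> x ^ e = 1)"
  have hox: "0 < ox \<and> x ^ ox = 1" unfolding ox_def by (rule LeastI[of _ N]) (use assms in auto)
  show "(LEAST e. 0 < e \<and> x ^ e = 1) > 0" using hox by (simp add: ox_def)
  have "x ^ e = 1 \<longleftrightarrow> ox dvd e"
  proof
    assume "ox dvd e"
    then obtain c where "e = ox * c" by auto
    thus "x ^ e = 1" using hox by (simp add: power_mult)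
  next
    assume e: "x ^ e = 1"
    have "x ^ e = x ^ (ox * (e div ox) + e mod ox)" by (simp only: mult_div_mod_eq)
    also have "\<dots> = (x ^ ox) ^ (e div ox) * x ^ (e mod ox)" by (simp only: power_add power_mult)
    finally have "x ^ e = (x ^ ox) ^ (e div ox) * x ^ (e mod ox)" .
    hence "x ^ (e mod ox) = 1" using e hox by simp
    moreover have "e mod ox < ox" using hox by simp
    ultimately have "e mod ox = 0" using not_less_Least[of "e mod ox" "\<lambda>e. 0 < e \<and> x ^ e = 1"]
      unfolding ox_def[symmetric] by auto
    thus "ox dvd e" by auto
  qed
  thus "x ^ e = 1 \<longleftrightarrow> (LEAST e. 0 < e \<and> x ^ e = 1) dvd e" by (simp add: ox_def)
qed

lemma degree_map_ac [simp]: "degree (map_poly to_ac p) = degree (p::'a::field poly)"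
  by (rule degree_map_poly) simp

lemma map_ac_eq_0 [simp]: "map_poly to_ac p = 0 \<longleftrightarrow> (p::'a::field poly) = 0"
  by (simp add: map_poly_eq_0_iff poly_eq_iff coeff_map_poly)

lemma frob_comp: "(x::'b::monoid_mult) ^ ((k::nat) ^ (a + b)) = (x ^ (k ^ a)) ^ (k ^ b)"
  by (simp only: power_add power_mult)

lemma frob_neg:
  fixes y :: "'a::{finite,field} alg_closure"
  shows "(- y) ^ card (UNIV::'a set) = - (y ^ card (UNIV::'a set))"
proof -
  have "0 = (- y + y) ^ card (UNIV::'a set)" using card_field_ge2[where 'a='a] by simp
  also have "\<dots> = (- y) ^ card (UNIV::'a set) + y ^ card (UNIV::'a set)" by (rule frob_add)
  finally show ?thesis by (simp add: eq_neg_iff_add_eq_0)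
qed

lemma orbit_exists:
  fixes g :: "'a::{finite,field} poly" and x :: "'a alg_closure"
  assumes "g \<noteq> 0" "poly (map_poly to_ac g) x = 0"
  shows "\<exists>m>0. x ^ (card (UNIV::'a set) ^ m) = x"
proof -
  define k where "k = card (UNIV::'a set)"
  have k2: "k \<ge> 2" using card_field_ge2[where 'a='a] k_def by simp
  define R where "R = {y. poly (map_poly to_ac g) y = 0}"
  have finR: "finite R" unfolding R_def by (rule poly_roots_finite) (use assms in simp)
  have inR: "x ^ (k ^ i) \<in> R" for i
    using ev_frob[of g x i] assms(2) k2 by (simp add: R_def k_def power_0_left)
  have "\<not> inj_on (\<lambda>i. x ^ (k ^ i)) {..card R}"
  proof
    assume "inj_on (\<lambda>i. x ^ (k ^ i)) {..card R}"
    hence "card {..card R} \<le> card R" by (rule card_inj_on_le) (use inR finR in auto)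
    thus False by simp
  qed
  then obtain i j where ij: "i \<noteq> j" "x ^ (k ^ i) = x ^ (k ^ j)" by (auto simp: inj_on_def)
  have "\<exists>i j. i < j \<and> x ^ (k ^ i) = x ^ (k ^ j)"
  proof (cases "i < j")
    case True thus ?thesis using ij by blast
  next
    case False thus ?thesis using ij by (intro exI[of _ j] exI[of _ i]) auto
  qed
  then obtain i j where ij: "i < j" "x ^ (k ^ i) = x ^ (k ^ j)" by blast
  have "x ^ (k ^ j) = (x ^ (k ^ (j - i))) ^ (k ^ i)"
    using frob_comp[of x k "j - i" i] ij(1) by simp
  hence "(x ^ (k ^ (j - i))) ^ (k ^ i) = x ^ (k ^ i)" using ij by simp
  hence "x ^ (k ^ (j - i)) = x" unfolding k_def by (rule frobm_inj)
  thus ?thesis using ij(1) by (intro exI[of _ "j - i"]) (simp add: k_def)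
qed

lemma orbit:
  fixes g :: "'a::{finite,field} poly" and x :: "'a alg_closure"
  assumes irr: "irreducible g" and root: "poly (map_poly to_ac g) x = 0"
  shows "x ^ (card (UNIV::'a set) ^ m) = x \<longleftrightarrow> degree g dvd m"
proof -
  define k where "k = card (UNIV::'a set)"
  have k2: "k \<ge> 2" using card_field_ge2[where 'a='a] k_def by simp
  have g0: "g \<noteq> 0" using irr by auto
  define d where "d = (LEAST m. 0 < m \<and> x ^ (k ^ m) = x)"
  obtain m0 where m0: "0 < m0" "x ^ (k ^ m0) = x" using orbit_exists[OF g0 root] k_def by auto
  have hd: "0 < d \<and> x ^ (k ^ d) = x" unfolding d_def by (rule LeastI[of _ m0]) (use m0 in auto)
  have mult: "x ^ (k ^ (d * c)) = x" for c
  proof (induction c)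
    case (Suc c)
    have "x ^ (k ^ (d * Suc c)) = (x ^ (k ^ (d * c))) ^ (k ^ d)"
      using frob_comp[of x k "d * c" d] by (simp add: mult_Suc_right add.commute)
    thus ?case using Suc.IH hd by simp
  qed simp
  have period: "x ^ (k ^ m) = x \<longleftrightarrow> d dvd m" for m
  proof
    assume "d dvd m"
    then obtain c where "m = d * c" by auto
    thus "x ^ (k ^ m) = x" using mult by simp
  next
    assume e: "x ^ (k ^ m) = x"
    have "x ^ (k ^ m) = x ^ (k ^ (d * (m div d) + m mod d))" by (simp only: mult_div_mod_eq)
    also have "\<dots> = x ^ (k ^ (m mod d))" by (simp only: frob_comp mult)
    finally have "x ^ (k ^ (m mod d)) = x" using e by simp
    moreover have "m mod d < d" using hd by simp
    ultimately have "m mod d = 0" using not_less_Least[of "m mod d" "\<lambda>m. 0 < m \<and> x ^ (k ^ m) = x"]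
      unfolding d_def[symmetric] by auto
    thus "d dvd m" by auto
  qed
  define R where "R = {y. poly (map_poly to_ac g) y = 0}"
  have finR: "finite R" unfolding R_def by (rule poly_roots_finite) (use g0 in simp)
  have inR: "x ^ (k ^ i) \<in> R" for i
    using ev_frob[of g x i] root k2 by (simp add: R_def k_def power_0_left)
  have inj: "inj_on (\<lambda>i. x ^ (k ^ i)) {..<d}"
  proof (rule inj_onI, rule ccontr)
    fix i j assume ij: "i \<in> {..<d}" "j \<in> {..<d}" "x ^ (k ^ i) = x ^ (k ^ j)" "i \<noteq> j"
    have *: "x ^ (k ^ (b - a)) = x" if "a < b" "b < d" "x ^ (k ^ a) = x ^ (k ^ b)" for a b
    proof -
      have "x ^ (k ^ b) = (x ^ (k ^ (b - a))) ^ (k ^ a)"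
        using frob_comp[of x k "b - a" a] that(1) by simp
      hence "(x ^ (k ^ (b - a))) ^ (k ^ a) = x ^ (k ^ a)" using that by simp
      thus ?thesis unfolding k_def by (rule frobm_inj)
    qed
    have "\<exists>a b. a < b \<and> b < d \<and> x ^ (k ^ a) = x ^ (k ^ b)"
    proof (cases "i < j")
      case True thus ?thesis using ij by auto
    next
      case False thus ?thesis using ij by (intro exI[of _ j] exI[of _ i]) auto
    qed
    then obtain a b where ab: "a < b" "b < d" "x ^ (k ^ a) = x ^ (k ^ b)" by blast
    have "x ^ (k ^ (b - a)) = x" by (rule *[OF ab])
    moreover have "b - a < d" "0 < b - a" using ab by auto
    ultimately show False using not_less_Least[of "b - a" "\<lambda>m. 0 < m \<and> x ^ (k ^ m) = x"]
      unfolding d_def[symmetric] by auto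
  qed
  have "d = card ((\<lambda>i. x ^ (k ^ i)) ` {..<d})" using card_image[OF inj] by simp
  also have "\<dots> \<le> card R" by (intro card_mono finR) (use inR in auto)
  also have "\<dots> \<le> degree (map_poly to_ac g)" unfolding R_def by (rule card_poly_roots_bound) (use g0 in simp)
  finally have d_le: "d \<le> degree g" by simp
  define F where "F = (\<lambda>i. [:- (x ^ (k ^ i)), 1:])"
  define h where "h = (\<Prod>i<d. F i)"
  have F0: "F i \<noteq> 0" for i by (simp add: F_def)
  have h0: "h \<noteq> 0" unfolding h_def using F0 by simp
  have degh: "degree h = d" unfolding h_def
    by (subst degree_prod_eq_sum_degree) (auto simp: F0 F_def)
  have rooth: "poly h x = 0" unfolding h_def poly_prod using hd
    by (intro prod_zero[of "{..<d}"]) (auto intro!: bexI[of _ 0] simp: F_def)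
  have frobhom: "map_poly (\<lambda>y. y ^ k) (\<Prod>i<d. F i) = (\<Prod>i<d. map_poly (\<lambda>y. y ^ k) (F i))"
    by (rule map_poly_prod_hom) (use k2 in \<open>simp_all add: k_def frob_add power_mult_distrib\<close>)
  have FS: "map_poly (\<lambda>y. y ^ k) (F i) = F (Suc i)" for i
    using k2 by (simp add: F_def map_poly_pCons k_def frob_neg flip: power_mult power_Suc2)
  have shift: "(\<Prod>i<d. F (Suc i)) = (\<Prod>i<d. F i)"
  proof -
    have "F 0 * (\<Prod>i<d. F (Suc i)) = (\<Prod>i<Suc d. F i)" by (rule prod.lessThan_Suc_shift[symmetric])
    also have "\<dots> = (\<Prod>i<d. F i) * F d" by simp
    also have "F d = F 0" using hd by (simp add: F_def)
    finally show ?thesis using F0[of 0] by (simp add: mult.commute)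
  qed
  have hfix: "map_poly (\<lambda>y. y ^ k) h = h"
    unfolding h_def frobhom FS shift ..
  have coeff_fix: "coeff h j \<in> range to_ac" for j
  proof -
    have "coeff h j ^ k = coeff (map_poly (\<lambda>y. y ^ k) h) j"
      using k2 by (simp add: coeff_map_poly power_0_left)
    also have "\<dots> = coeff h j" by (simp add: hfix)
    finally show ?thesis by (intro frob_fixed) (simp add: k_def)
  qed
  define h' where "h' = map_poly of_ac h"
  have hh': "map_poly to_ac h' = h"
    by (rule poly_eqI) (auto simp: coeff_map_poly h'_def to_ac_of_ac[OF coeff_fix])
  have "g dvd h'" by (rule irr_root_dvd[OF irr root]) (simp add: hh' rooth)
  moreover have "h' \<noteq> 0" using h0 hh' by auto
  ultimately have "degree g \<le> degree h'" by (rule dvd_imp_degree_le)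
  also have "degree h' = d" using degh hh' degree_map_ac[of h'] by simp
  finally have "degree g = d" using d_le by simp
  thus ?thesis using period[of m] by (simp add: k_def)
qed

lemma irr_order:
  fixes P :: "'a::{finite,field} poly" and x :: "'a alg_closure"
  assumes irr: "irreducible P" and root: "poly (map_poly to_ac P) x = 0"
  shows "poly_order P = (LEAST e. 0 < e \<and> x ^ e = 1)"
proof -
  have *: "P dvd [:0,1:]^e - 1 \<longleftrightarrow> x^e = 1" for e
  proof
    assume "P dvd [:0,1:]^e - 1"
    from ev_dvd[OF this root] show "x^e = 1" by (simp add: ev_diff ev_power)
  next
    assume "x^e = 1"
    show "P dvd [:0,1:]^e - 1" by (rule irr_root_dvd[OF irr root]) (simp add: ev_diff ev_power \<open>x^e = 1\<close>)
  qed
  show ?thesis unfolding poly_order_def by (simp add: *)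
qed

lemma fix_iff_one:
  fixes y :: "'b::field"
  assumes "y \<noteq> 0" "N > 0"
  shows "y ^ N = y \<longleftrightarrow> y ^ (N - 1) = 1"
proof -
  have "y ^ N = y * y ^ (N - 1)" using assms(2) by (cases N) auto
  thus ?thesis using assms(1) by (metis mult.right_neutral mult_left_cancel)
qed

lemma root_irr_factor:
  fixes P :: "'a::field poly"
  assumes "P \<noteq> 0" "poly (map_poly to_ac P) x = 0"
  shows "\<exists>G. irreducible G \<and> G dvd P \<and> poly (map_poly to_ac G) x = 0"
  using assms
proof (induction "degree P" arbitrary: P rule: less_induct)
  case (less P)
  have nu: "\<not> is_unit P"
  proof
    assume "is_unit P"
    then obtain c where "P = [:c:]" "c dvd 1" by (auto simp: is_unit_poly_iff)
    thus False using less.prems by auto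
  qed
  show ?case
  proof (cases "irreducible P")
    case True thus ?thesis using less.prems by (intro exI[of _ P]) simp
  next
    case False
    have "\<not> (\<forall>a b. P = a * b \<longrightarrow> is_unit a \<or> is_unit b)"
      using False Factorial_Ring.irreducibleI less.prems(1) nu by blast
    then obtain a b where ab: "P = a * b" "\<not> is_unit a" "\<not> is_unit b" by blast
    have a0: "a \<noteq> 0" "b \<noteq> 0" using ab less.prems(1) by auto
    have "degree a > 0" "degree b > 0" using ab(2,3) a0 is_unit_iff_degree by auto
    hence lt: "degree a < degree P" "degree b < degree P" using ab(1) a0 by (auto simp: degree_mult_eq)
    have "poly (map_poly to_ac a) x * poly (map_poly to_ac b) x = 0"
      using less.prems(2) ab(1) by (simp add: ev_mult)
    hence "poly (map_poly to_ac a) x = 0 \<or> poly (map_poly to_ac b) x = 0" by simp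
    thus ?thesis
    proof
      assume "poly (map_poly to_ac a) x = 0"
      from less.hyps[OF lt(1) a0(1) this] obtain G where "irreducible G" "G dvd a" "poly (map_poly to_ac G) x = 0" by blast
      thus ?thesis using ab(1) by (meson dvd_mult2)
    next
      assume "poly (map_poly to_ac b) x = 0"
      from less.hyps[OF lt(2) a0(2) this] obtain G where "irreducible G" "G dvd b" "poly (map_poly to_ac G) x = 0" by blast
      thus ?thesis using ab(1) by (meson dvd_mult)
    qed
  qed
qed

lemma exists_zeta:
  fixes r :: nat
  assumes "of_nat r \<noteq> (0::'b::alg_closed_field)" "r \<ge> 2"
  shows "\<exists>z::'b. z ^ r = 1 \<and> z \<noteq> 1"
proof -
  define S :: "'b poly" where "S = (\<Sum>i<r. monom 1 i)"
  have cS: "coeff S (r - 1) = 1" using assms(2) by (simp add: S_def coeff_sum coeff_monom)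
  have "degree S \<ge> r - 1" by (rule le_degree) (use cS in simp)
  hence "degree S > 0" using assms by simp
  then obtain z where z: "poly S z = 0" using alg_closed_imp_poly_has_root by blast
  have pS: "poly S y = (\<Sum>i<r. y ^ i)" for y by (simp add: S_def poly_sum poly_monom)
  have "z ^ r - 1 = (z - 1) * (\<Sum>i<r. z ^ i)" by (rule power_diff_1_eq)
  hence "z ^ r = 1" using z pS by simp
  moreover have "z \<noteq> 1"
  proof
    assume "z = 1"
    hence "poly S 1 = 0" using z by simp
    thus False using pS[of 1] assms(1) by simp
  qed
  ultimately show ?thesis by blast
qed

lemma of_nat_r_nonzero:
  assumes "prime r" "\<not> r dvd card (UNIV :: 'a::{finite,field} set)"
  shows "of_nat r \<noteq> (0::'a alg_closure)"
proof
  assume "of_nat r = (0::'a alg_closure)"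
  hence "to_ac (of_nat r :: 'a) = 0" by simp
  hence "(of_nat r :: 'a) = 0" by (simp del: to_ac_of_nat)
  hence "CHAR('a) dvd r" by (simp add: of_nat_eq_0_iff_char_dvd)
  moreover have "CHAR('a) \<noteq> 1" by simp
  ultimately have "CHAR('a) = r" using assms(1) by (auto simp: prime_nat_iff)
  thus False using CHAR_dvd_CARD[where 'a='a] assms(2) by simp
qed

theorem mainTheorem5:
  fixes f \<psi> :: "'a::{finite,field} poly" and r n t :: nat
  assumes r_prime: "prime r" and r_odd: "odd r"
    and r_ndvd: "\<not> r dvd card (UNIV :: 'a set)"
    and ord_q: "ord r (card (UNIV :: 'a set)) = r - 1"
    and n_gt: "n > 1" and n_coprime: "gcd n (r - 1) = 1"
    and f_monic: "lead_coeff f = 1" and f_irr: "irreducible f" and f_deg: "degree f = n"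
    and f_order: "poly_order f = t"
    and psi_monic: "lead_coeff \<psi> = 1"
    and psi_deg_le: "degree \<psi> \<le> n"
    and psi_ann: "f dvd pcompose \<psi> ([:0, 1:] ^ r mod f)"
    and psi_min: "\<And>g. g \<noteq> 0 \<Longrightarrow> f dvd pcompose g ([:0, 1:] ^ r mod f) \<Longrightarrow> degree \<psi> \<le> degree g"
  shows "irreducible \<psi> \<and> degree \<psi> = n \<and>
         f dvd pcompose \<psi> ([:0, 1:] ^ r) \<and>
         irreducible (pcompose \<psi> ([:0, 1:] ^ r) div f) \<and>
         degree (pcompose \<psi> ([:0, 1:] ^ r) div f) = (r - 1) * n \<and>
         poly_order (pcompose \<psi> ([:0, 1:] ^ r) div f) = r * t"
proof -
  define q where "q = card (UNIV :: 'a set)"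
  have q2: "q \<ge> 2" using card_field_ge2[where 'a='a] q_def by simp
  have n0: "n > 0" using n_gt by simp
  have r2: "r \<ge> 2" using r_prime prime_ge_2_nat by blast
  have r3: "r \<ge> 3" using r2 r_odd by (cases "r = 2") auto
  have qpos: "q ^ m > 0" for m using q2 by simp
  have "degree (map_poly to_ac f) > 0" using f_deg n_gt by simp
  then obtain \<alpha> where \<alpha>: "poly (map_poly to_ac f) \<alpha> = 0" using alg_closed_imp_poly_has_root by blast
  have \<alpha>0: "\<alpha> \<noteq> 0"
  proof
    assume "\<alpha> = 0"
    hence "to_ac (coeff f 0) = 0" using \<alpha> by (simp add: poly_0_coeff_0 coeff_map_poly)
    hence "poly f 0 = 0" by (simp add: poly_0_coeff_0)
    hence "[:0, 1:] dvd f" using poly_eq_0_iff_dvd[of f 0] by simp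
    hence "f dvd [:0,1:] \<or> is_unit [:0, 1::'a:]" by (rule irreducibleD'[OF f_irr])
    moreover have "\<not> is_unit [:0, 1::'a:]" by (simp add: is_unit_iff_degree)
    ultimately have "f dvd [:0,1:]" by simp
    hence "degree f \<le> 1" using dvd_imp_degree_le[of f "[:0,1:]"] by simp
    thus False using f_deg n_gt by simp
  qed
  have orb\<alpha>: "\<alpha> ^ (q ^ m) = \<alpha> \<longleftrightarrow> n dvd m" for m
    using orbit[OF f_irr \<alpha>, of m] f_deg q_def by simp
  have "\<alpha> ^ (q ^ n) = \<alpha>" using orb\<alpha>[of n] by simp
  hence ex\<alpha>: "\<alpha> ^ (q ^ n - 1) = 1" using fix_iff_one[OF \<alpha>0 qpos[of n]] by simp
  have "q \<le> q ^ n" using q2 n0 by (intro self_le_power) auto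
  hence qn1: "q ^ n - 1 > 0" using q2 by simp
  have tdef: "t = (LEAST e. 0 < e \<and> \<alpha> ^ e = 1)"
    unfolding f_order[symmetric] by (rule irr_order[OF f_irr \<alpha>])
  have ord\<alpha>: "\<alpha> ^ e = 1 \<longleftrightarrow> t dvd e" for e
    unfolding tdef by (rule mult_order(1)[OF ex\<alpha> qn1])
  have tpos: "t > 0" unfolding tdef by (rule mult_order(2)[OF ex\<alpha> qn1])
  have \<alpha>fix: "\<alpha> ^ (q ^ m) = \<alpha> \<longleftrightarrow> t dvd q ^ m - 1" for m
    using fix_iff_one[OF \<alpha>0 qpos[of m]] ord\<alpha> by simp
  have tq: "t dvd q ^ m - 1 \<longleftrightarrow> n dvd m" for m using \<alpha>fix orb\<alpha> by simp
  have rq: "r dvd q ^ m - 1 \<longleftrightarrow> (r - 1) dvd m" for m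
  proof -
    have "r dvd q ^ m - 1 \<longleftrightarrow> [q ^ m = 1] (mod r)"
      using cong_altdef_nat[of 1 "q ^ m" r] qpos[of m] by simp
    also have "\<dots> \<longleftrightarrow> ord r q dvd m" by (rule ord_divides)
    finally show ?thesis using ord_q q_def by simp
  qed
  have r_nd_t: "\<not> r dvd t"
  proof
    assume "r dvd t"
    moreover have "t dvd q ^ n - 1" using tq[of n] by simp
    ultimately have "r dvd q ^ n - 1" by (rule dvd_trans)
    hence "(r - 1) dvd n" using rq by simp
    hence "(r - 1) dvd gcd n (r - 1)" by simp
    hence "r - 1 dvd 1" using n_coprime by simp
    thus False using r3 by simp
  qed
  have cop_rt: "coprime r t" using prime_imp_coprime[OF r_prime r_nd_t] .
  define \<beta> where "\<beta> = \<alpha> ^ r"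
  have \<beta>0: "\<beta> \<noteq> 0" using \<alpha>0 by (simp add: \<beta>_def)
  have ord\<beta>: "\<beta> ^ e = 1 \<longleftrightarrow> t dvd e" for e
  proof -
    have "\<beta> ^ e = \<alpha> ^ (e * r)" unfolding \<beta>_def by (simp only: power_mult[symmetric] mult.commute)
    also have "\<dots> = 1 \<longleftrightarrow> t dvd e * r" by (rule ord\<alpha>)
    also have "\<dots> \<longleftrightarrow> t dvd e" using cop_rt by (simp add: coprime_dvd_mult_left_iff coprime_commute)
    finally show ?thesis .
  qed
  have \<beta>fix: "\<beta> ^ (q ^ m) = \<beta> \<longleftrightarrow> n dvd m" for m
    using fix_iff_one[OF \<beta>0 qpos[of m]] ord\<beta> tq by simp
  have R\<alpha>: "poly (map_poly to_ac ([:0,1:] ^ r mod f)) \<alpha> = \<beta>"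
  proof -
    have "[:0,1:] ^ r mod f = [:0,1:] ^ r - ([:0,1:] ^ r div f) * f" by (simp add: minus_div_mult_eq_mod)
    thus ?thesis using \<alpha> by (simp add: ev_diff ev_mult ev_power \<beta>_def)
  qed
  have \<psi>\<beta>: "poly (map_poly to_ac \<psi>) \<beta> = 0"
    using ev_dvd[OF psi_ann \<alpha>] by (simp add: ev_pcompose R\<alpha>)
  have \<psi>0: "\<psi> \<noteq> 0" using psi_monic by auto
  have f_nu: "\<not> is_unit f" using f_irr by (simp add: irreducible_not_unit)
  have \<psi>irr: "irreducible \<psi>"
  proof (rule Factorial_Ring.irreducibleI)
    show "\<psi> \<noteq> 0" by fact
    show "\<not> is_unit \<psi>"
    proof
      assume "is_unit \<psi>"
      hence "degree \<psi> = 0" using \<psi>0 is_unit_iff_degree by auto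
      hence "\<psi> = [:lead_coeff \<psi>:]" by (metis degree_eq_zeroE lead_coeff_pCons(2) pCons_0_0)
      hence "\<psi> = 1" using psi_monic by (simp add: one_pCons)
      hence "f dvd 1" using psi_ann by (simp add: pcompose_1)
      thus False using f_nu by simp
    qed
    fix a b assume ab: "\<psi> = a * b"
    show "is_unit a \<or> is_unit b"
    proof (rule ccontr)
      assume "\<not> (is_unit a \<or> is_unit b)"
      hence nu: "\<not> is_unit a" "\<not> is_unit b" by auto
      have a0: "a \<noteq> 0" "b \<noteq> 0" using ab \<psi>0 by auto
      have "degree a > 0" "degree b > 0" using nu a0 is_unit_iff_degree by auto
      hence lt: "degree a < degree \<psi>" "degree b < degree \<psi>" using ab a0 by (auto simp: degree_mult_eq)
      have "f dvd pcompose a ([:0, 1:] ^ r mod f) * pcompose b ([:0, 1:] ^ r mod f)"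
        using psi_ann ab by (simp add: pcompose_mult)
      hence "f dvd pcompose a ([:0, 1:] ^ r mod f) \<or> f dvd pcompose b ([:0, 1:] ^ r mod f)"
        by (rule irr_prime[OF f_irr])
      thus False using psi_min[OF a0(1)] psi_min[OF a0(2)] lt by force
    qed
  qed
  have deg\<psi>: "degree \<psi> = n"
  proof -
    have "degree \<psi> dvd m \<longleftrightarrow> n dvd m" for m
      using orbit[OF \<psi>irr \<psi>\<beta>, of m] \<beta>fix[of m] q_def by simp
    from this[of n] this[of "degree \<psi>"] show ?thesis by (simp add: dvd_antisym)
  qed
  define P where "P = pcompose \<psi> ([:0, 1:] ^ r)"
  have evP: "poly (map_poly to_ac P) y = poly (map_poly to_ac \<psi>) (y ^ r)" for y
    by (simp add: P_def ev_pcompose ev_power)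
  have fP: "f dvd P" by (rule irr_root_dvd[OF f_irr \<alpha>]) (simp add: evP \<psi>\<beta>[unfolded \<beta>_def])
  have degP: "degree P = n * r" by (simp add: P_def degree_pcompose deg\<psi> degree_power_eq)
  have P0: "P \<noteq> 0" using degP n0 r2 by auto
  obtain \<zeta> :: "'a alg_closure" where \<zeta>: "\<zeta> ^ r = 1" "\<zeta> \<noteq> 1"
    using exists_zeta[OF of_nat_r_nonzero[OF r_prime r_ndvd] r2] by blast
  have \<zeta>ord: "\<zeta> ^ e = 1 \<longleftrightarrow> r dvd e" for e
  proof -
    define l where "l = (LEAST e. 0 < e \<and> \<zeta> ^ e = 1)"
    have r0: "r > 0" using r2 by simp
    have l: "\<zeta> ^ e = 1 \<longleftrightarrow> l dvd e" for e unfolding l_def by (rule mult_order(1)[OF \<zeta>(1) r0])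
    have "l dvd r" using l \<zeta>(1) by simp
    moreover have "l \<noteq> 1" using l[of 1] \<zeta>(2) by auto
    ultimately have "l = r" using r_prime by (auto simp: prime_nat_iff)
    thus ?thesis using l by simp
  qed
  define \<gamma> where "\<gamma> = \<alpha> * \<zeta>"
  have \<zeta>0: "\<zeta> \<noteq> 0"
  proof
    assume "\<zeta> = 0"
    with \<zeta>(1) r2 show False by (simp add: power_0_left)
  qed
  have \<gamma>0: "\<gamma> \<noteq> 0" using \<alpha>0 \<zeta>0 by (simp add: \<gamma>_def)
  have \<gamma>ord: "\<gamma> ^ e = 1 \<longleftrightarrow> r * t dvd e" for e
  proof
    assume "r * t dvd e"
    hence "r dvd e" "t dvd e" by (auto intro: dvd_mult_left dvd_mult_right)
    hence "\<alpha> ^ e = 1" "\<zeta> ^ e = 1" using ord\<alpha> \<zeta>ord by auto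
    thus "\<gamma> ^ e = 1" by (simp add: \<gamma>_def power_mult_distrib)
  next
    assume e: "\<gamma> ^ e = 1"
    have "\<alpha> ^ (e * t) = 1" using ord\<alpha> by simp
    hence "\<zeta> ^ (e * t) = 1" using e by (metis \<gamma>_def mult_1 power_mult power_mult_distrib power_one)
    hence "r dvd e * t" using \<zeta>ord by simp
    hence re: "r dvd e" using r_nd_t r_prime by (simp add: prime_dvd_mult_iff)
    have "\<zeta> ^ (e * r) = 1" using \<zeta>ord by simp
    hence "\<alpha> ^ (e * r) = 1" using e by (metis \<gamma>_def mult.right_neutral power_mult power_mult_distrib power_one)
    hence "t dvd e * r" using ord\<alpha> by simp
    hence te: "t dvd e" using cop_rt by (simp add: coprime_dvd_mult_left_iff coprime_commute)
    show "r * t dvd e" by (rule divides_mult[OF re te cop_rt])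
  qed
  have \<gamma>fix: "\<gamma> ^ (q ^ m) = \<gamma> \<longleftrightarrow> n * (r - 1) dvd m" for m
  proof -
    have "\<gamma> ^ (q ^ m) = \<gamma> \<longleftrightarrow> r * t dvd q ^ m - 1"
      using fix_iff_one[OF \<gamma>0 qpos[of m]] \<gamma>ord by simp
    also have "\<dots> \<longleftrightarrow> r dvd q ^ m - 1 \<and> t dvd q ^ m - 1"
    proof
      assume "r * t dvd q ^ m - 1" thus "r dvd q ^ m - 1 \<and> t dvd q ^ m - 1"
        by (meson dvd_mult_left dvd_mult_right)
    next
      assume "r dvd q ^ m - 1 \<and> t dvd q ^ m - 1" thus "r * t dvd q ^ m - 1"
        using divides_mult[OF _ _ cop_rt] by blast
    qed
    also have "\<dots> \<longleftrightarrow> (r - 1) dvd m \<and> n dvd m" by (simp only: rq tq)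
    also have "\<dots> \<longleftrightarrow> n * (r - 1) dvd m"
    proof -
      have cnr: "coprime n (r - 1)" unfolding coprime_iff_gcd_eq_1 by (rule n_coprime)
      show ?thesis
      proof
        assume "(r - 1) dvd m \<and> n dvd m" thus "n * (r - 1) dvd m"
          using divides_mult[OF _ _ cnr] by blast
      next
        assume "n * (r - 1) dvd m" thus "(r - 1) dvd m \<and> n dvd m"
          by (meson dvd_mult_left dvd_mult_right)
      qed
    qed
    finally show ?thesis .
  qed
  have \<gamma>r: "\<gamma> ^ r = \<beta>" using \<zeta>(1) by (simp add: \<gamma>_def \<beta>_def power_mult_distrib)
  have \<gamma>root: "poly (map_poly to_ac P) \<gamma> = 0" using evP \<gamma>r \<psi>\<beta> by simp
  obtain G where G: "irreducible G" "G dvd P" "poly (map_poly to_ac G) \<gamma> = 0"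
    using root_irr_factor[OF P0 \<gamma>root] by blast
  have degG: "degree G = n * (r - 1)"
  proof -
    have "degree G dvd m \<longleftrightarrow> n * (r - 1) dvd m" for m
      using orbit[OF G(1) G(3), of m] \<gamma>fix[of m] q_def by simp
    from this[of "n * (r - 1)"] this[of "degree G"] show ?thesis by (simp add: dvd_antisym)
  qed
  have nlt: "n < n * (r - 1)" using n0 r3 by simp
  have fG: "\<not> f dvd G"
  proof
    assume "f dvd G"
    hence "G dvd f \<or> is_unit f" by (rule irreducibleD'[OF G(1)])
    hence "G dvd f" using f_nu by simp
    moreover have "f \<noteq> 0" using f_irr by auto
    ultimately have "degree G \<le> degree f" using dvd_imp_degree_le[of G f] by blast
    thus False using degG f_deg nlt by simp
  qed
  have "f * G dvd P" by (rule irr_coprime_mult[OF f_irr fG fP G(2)])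
  then obtain c where Pc: "P = f * G * c" by (auto elim: dvdE)
  have c0: "c \<noteq> 0" "f \<noteq> 0" "G \<noteq> 0" using Pc P0 by auto
  have "degree P = n + n * (r - 1) + degree c" using Pc c0 f_deg degG by (simp add: degree_mult_eq)
  moreover have "n * r = n + n * (r - 1)" using r2 by (cases r) auto
  ultimately have "degree c = 0" using degP by simp
  hence cu: "is_unit c" using c0 is_unit_iff_degree by auto
  have Pdiv: "P div f = G * c" using Pc c0 by (simp add: mult.assoc)
  have irrGc: "irreducible (G * c)"
    using irreducible_mult_unit_left[OF cu, of G] G(1) by (simp add: mult.commute)
  have degGc: "degree (G * c) = (r - 1) * n" using c0 \<open>degree c = 0\<close> degG by (simp add: degree_mult_eq mult.commute)
  have rootGc: "poly (map_poly to_ac (G * c)) \<gamma> = 0" using G(3) by (simp add: ev_mult)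
  have "poly_order (G * c) = (LEAST e. 0 < e \<and> \<gamma> ^ e = 1)" by (rule irr_order[OF irrGc rootGc])
  also have "\<dots> = r * t"
  proof (rule Least_equality)
    show "0 < r * t \<and> \<gamma> ^ (r * t) = 1" using \<gamma>ord tpos r2 by simp
    fix e assume "0 < e \<and> \<gamma> ^ e = 1"
    thus "r * t \<le> e" using \<gamma>ord by (auto intro: dvd_imp_le)
  qed
  finally have ordGc: "poly_order (G * c) = r * t" .
  show ?thesis
    using \<psi>irr deg\<psi> fP irrGc degGc ordGc Pdiv unfolding P_def by simp
qed

end
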